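(* For every infinite cardinal $\tau$ there exists a precompact (i.e. isomorphic to a subgroup of a compact group) Hausdorff Abelian topological group $G$ with $\psi(G)=\tau$, $d(G)=|G|=2^\tau$, and $w(G)=2^{2^\tau}$.
   Context: $\psi$ pseudocharacter, $d$ density, $w$ weight. *)

theory Defs
  imports "HOL-Analysis.Analysis" "HOL-Algebra.Algebra"
begin

definition topological_group :: "('g, 'm) monoid_scheme \<Rightarrow> 'g topology \<Rightarrow> bool" where
  "topological_group G T \<longleftrightarrow> group G \<and> topspace T = carrier G
     \<and> continuous_map (prod_topology T T) T (\<lambda>(x, y). x \<otimes>\<^bsub>G\<^esub> y)
     \<and> continuous_map T T (m_inv G)"

text \<open>Precompact (= totally bounded) topological group: every neighbourhood
of the identity covers the group by finitely many translates.\<close>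
definition precompact_group :: "('g, 'm) monoid_scheme \<Rightarrow> 'g topology \<Rightarrow> bool" where
  "precompact_group G T \<longleftrightarrow>
     (\<forall>U. openin T U \<and> \<one>\<^bsub>G\<^esub> \<in> U \<longrightarrow>
        (\<exists>F. finite F \<and> F \<subseteq> carrier G \<and> carrier G = (\<Union>x\<in>F. x <#\<^bsub>G\<^esub> U)))"

definition dense_in :: "'a topology \<Rightarrow> 'a set \<Rightarrow> bool" where
  "dense_in T D \<longleftrightarrow> D \<subseteq> topspace T \<and> T closure_of D = topspace T"

definition base_of :: "'a topology \<Rightarrow> 'a set set \<Rightarrow> bool" where
  "base_of T B \<longleftrightarrow> (\<forall>U\<in>B. openin T U) \<and>
     (\<forall>U. openin T U \<longrightarrow> (\<exists>B'\<subseteq>B. \<Union>B' = U))"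

definition density_is :: "'a topology \<Rightarrow> 'b rel \<Rightarrow> bool" where
  "density_is T r \<longleftrightarrow> (\<exists>D. dense_in T D \<and> ordIso2 (card_of D) r) \<and>
     (\<forall>D. dense_in T D \<longrightarrow> ordLeq2 r (card_of D))"

definition weight_is :: "'a topology \<Rightarrow> 'b rel \<Rightarrow> bool" where
  "weight_is T r \<longleftrightarrow> (\<exists>B. base_of T B \<and> ordIso2 (card_of B) r) \<and>
     (\<forall>B. base_of T B \<longrightarrow> ordLeq2 r (card_of B))"

definition pseudochar_at_le :: "'a topology \<Rightarrow> 'a \<Rightarrow> 'b rel \<Rightarrow> bool" where
  "pseudochar_at_le T x r \<longleftrightarrow>
     (\<exists>\<U>. (\<forall>U\<in>\<U>. openin T U) \<and> \<Inter>\<U> = {x} \<and> ordLeq2 (card_of \<U>) r)"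

text \<open>Pseudocharacter psi(X) = sup of the pointwise pseudocharacters equals the
cardinal r (r a cardinal on the type 'b; the supremum is taken among the
cardinals on that type).\<close>
definition pseudochar_is :: "'a topology \<Rightarrow> 'b rel \<Rightarrow> bool" where
  "pseudochar_is T r \<longleftrightarrow>
     (\<forall>x\<in>topspace T. pseudochar_at_le T x r) \<and>
     (\<forall>r'::'b rel. Card_order r' \<and> (\<forall>x\<in>topspace T. pseudochar_at_le T x r')
         \<longrightarrow> ordLeq2 r r')"

end

theory Submission imports Defs begin

lemma fin_less_inf: "finite A \<Longrightarrow> infinite B \<Longrightarrow> |A| <o |B|"
  by (meson card_of_Well_order card_of_ordLeq_finite not_ordLeq_iff_ordLess)

lemma card_of_Pow_mono': assumes "|A| \<le>o |B|" shows "|Pow A| \<le>o |Pow B|"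
proof-
  obtain f where "inj_on f A \<and> f ` A \<subseteq> B" using assms card_of_ordLeq[of A B] by auto
  hence "inj_on (image f) (Pow A) \<and> (image f) ` (Pow A) \<subseteq> (Pow B)"
    by (auto simp: inj_on_image_Pow image_Pow_mono)
  thus ?thesis using card_of_ordLeq[of "Pow A"] by metis
qed

lemma not_leq_less: "\<not> |A| \<le>o |B| \<Longrightarrow> |B| <o |A|"
  using not_ordLeq_iff_ordLess[OF card_of_Well_order[of B] card_of_Well_order[of A]] by simp

lemma small_union:
  assumes K: "infinite K" and I: "|I| <o |K|" and fin: "\<forall>i\<in>I. finite (f i)"
  shows "|\<Union>i\<in>I. f i| <o |K|"
proof (cases "finite I")
  case True then have "finite (\<Union>i\<in>I. f i)" using fin by blast
  then show ?thesis using K fin_less_inf by blast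
next
  case False
  have "|\<Union>i\<in>I. f i| \<le>o |I|"
  proof (rule card_of_UNION_ordLeq_infinite[OF False])
    show "|I| \<le>o |I|" by (rule card_of_mono1) simp
    show "\<forall>i\<in>I. |f i| \<le>o |I|" using fin False fin_less_inf ordLess_imp_ordLeq by blast
  qed
  then show ?thesis using I ordLeq_ordLess_trans by blast
qed

lemma nlists_card:
  assumes A: "infinite A"
  shows "|{xs. set xs \<subseteq> A \<and> length xs = n}| \<le>o |A|"
proof (induction n)
  case 0
  have "finite {xs. set xs \<subseteq> A \<and> length xs = 0}" by simp
  then show ?case using ordLess_imp_ordLeq[OF fin_less_inf[OF _ A]] by blast
next
  case (Suc n)
  let ?N = "{xs. set xs \<subseteq> A \<and> length xs = n}"
  have sub: "{xs. set xs \<subseteq> A \<and> length xs = Suc n} \<subseteq> (\<lambda>(a,xs). a#xs) ` (A \<times> ?N)"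
  proof
    fix xs assume "xs \<in> {xs. set xs \<subseteq> A \<and> length xs = Suc n}"
    then obtain a ys where "xs = a # ys" "a \<in> A" "set ys \<subseteq> A" "length ys = n"
      by (auto simp: length_Suc_conv)
    then show "xs \<in> (\<lambda>(a,xs). a#xs) ` (A \<times> ?N)" by force
  qed
  obtain a where "a \<in> A" using A by (metis ex_in_conv finite.emptyI)
  then have "replicate n a \<in> ?N" by auto
  then have ne: "?N \<noteq> {}" by blast
  have "|A \<times> ?N| =o |A|" using card_of_Times_infinite[OF A ne Suc] by blast
  moreover have "|(\<lambda>(a,xs). a#xs) ` (A \<times> ?N)| \<le>o |A \<times> ?N|" by (rule card_of_image)
  ultimately have "|(\<lambda>(a,xs). a#xs) ` (A \<times> ?N)| \<le>o |A|" by (rule ordLeq_ordIso_trans[rotated])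
  then show ?case by (rule ordLeq_transitive[OF card_of_mono1[OF sub]])
qed

lemma Fpow_card:
  assumes A: "infinite A"
  shows "|Fpow A| \<le>o |A|"
proof -
  let ?L = "\<Union>n. {xs. set xs \<subseteq> A \<and> length xs = n}"
  have s1: "Fpow A \<subseteq> set ` ?L"
  proof
    fix F assume "F \<in> Fpow A"
    then have "finite F" "F \<subseteq> A" by (auto simp: Fpow_def)
    then obtain xs where "set xs = F" using finite_list by blast
    then show "F \<in> set ` ?L" using \<open>F \<subseteq> A\<close> by blast
  qed
  have s2: "|set ` ?L| \<le>o |?L|" by (rule card_of_image)
  have s3: "|?L| \<le>o |A|"
  proof (rule card_of_UNION_ordLeq_infinite[OF A])
    show "|UNIV::nat set| \<le>o |A|" using A infinite_iff_card_of_nat by auto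
    show "\<forall>i\<in>UNIV. |{xs. set xs \<subseteq> A \<and> length xs = i}| \<le>o |A|"
      using nlists_card[OF A] by blast
  qed
  show ?thesis by (rule ordLeq_transitive[OF card_of_mono1[OF s1] ordLeq_transitive[OF s2 s3]])
qed


section \<open>Topologies generated by Boolean characters\<close>

definition agree :: "('g \<Rightarrow> bool) \<Rightarrow> 'g \<Rightarrow> 'g \<Rightarrow> bool" where
  "agree \<xi> y x \<longleftrightarrow> (\<xi> y = \<xi> x)"

definition nbhd :: "('g,'m) monoid_scheme \<Rightarrow> ('g \<Rightarrow> bool) set \<Rightarrow> 'g \<Rightarrow> 'g set" where
  "nbhd G F x = {y \<in> carrier G. \<forall>\<xi>\<in>F. agree \<xi> y x}"

lemma mem_nbhd: "y \<in> nbhd G F x \<longleftrightarrow> y \<in> carrier G \<and> (\<forall>\<xi>\<in>F. \<xi> y = \<xi> x)"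
  by (simp add: nbhd_def agree_def)

definition opn :: "('g,'m) monoid_scheme \<Rightarrow> ('g \<Rightarrow> bool) set \<Rightarrow> 'g set \<Rightarrow> bool" where
  "opn G H U \<longleftrightarrow> U \<subseteq> carrier G \<and> (\<forall>x\<in>U. \<exists>F. finite F \<and> F \<subseteq> H \<and> nbhd G F x \<subseteq> U)"

definition topH :: "('g,'m) monoid_scheme \<Rightarrow> ('g \<Rightarrow> bool) set \<Rightarrow> 'g topology" where
  "topH G H = topology (opn G H)"

lemma nbhd_mono: "F \<subseteq> F' \<Longrightarrow> nbhd G F' x \<subseteq> nbhd G F x"
  unfolding nbhd_def by auto

lemma opnD1: "opn G H U \<Longrightarrow> U \<subseteq> carrier G"
  by (simp add: opn_def)

lemma opnD2: "opn G H U \<Longrightarrow> x \<in> U \<Longrightarrow> \<exists>F. finite F \<and> F \<subseteq> H \<and> nbhd G F x \<subseteq> U"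
  by (simp add: opn_def)

lemma opnI: "U \<subseteq> carrier G \<Longrightarrow> (\<And>x. x \<in> U \<Longrightarrow> \<exists>F. finite F \<and> F \<subseteq> H \<and> nbhd G F x \<subseteq> U) \<Longrightarrow> opn G H U"
  by (simp add: opn_def)

lemma istop_opn: "istopology (opn G H)"
  unfolding istopology_def
proof (intro conjI allI impI)
  fix S T assume S: "opn G H S" and T: "opn G H T"
  show "opn G H (S \<inter> T)"
  proof (rule opnI)
    have "S \<subseteq> carrier G" using S by (rule opnD1)
    then show "S \<inter> T \<subseteq> carrier G" by blast
    fix x assume x: "x \<in> S \<inter> T"
    have xs: "x \<in> S" and xt: "x \<in> T" using x by auto
    obtain F1 where F1: "finite F1" "F1 \<subseteq> H" "nbhd G F1 x \<subseteq> S" using opnD2[OF S xs] by blast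
    obtain F2 where F2: "finite F2" "F2 \<subseteq> H" "nbhd G F2 x \<subseteq> T" using opnD2[OF T xt] by blast
    have "nbhd G (F1 \<union> F2) x \<subseteq> nbhd G F1 x" by (rule nbhd_mono) simp
    moreover have "nbhd G (F1 \<union> F2) x \<subseteq> nbhd G F2 x" by (rule nbhd_mono) simp
    ultimately have "nbhd G (F1 \<union> F2) x \<subseteq> S \<inter> T" using F1(3) F2(3) by blast
    moreover have "finite (F1 \<union> F2)" "F1 \<union> F2 \<subseteq> H" using F1 F2 by auto
    ultimately show "\<exists>F. finite F \<and> F \<subseteq> H \<and> nbhd G F x \<subseteq> S \<inter> T" by blast
  qed
next
  fix K assume K: "\<forall>S\<in>K. opn G H S"
  show "opn G H (\<Union>K)"
  proof (rule opnI)
    show "\<Union>K \<subseteq> carrier G"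
    proof
      fix x assume "x \<in> \<Union>K"
      then obtain S where S: "S \<in> K" "x \<in> S" by blast
      have "opn G H S" using K S(1) by blast
      then have "S \<subseteq> carrier G" by (rule opnD1)
      then show "x \<in> carrier G" using S(2) by blast
    qed
    fix x assume "x \<in> \<Union>K"
    then obtain S where S: "S \<in> K" "x \<in> S" by blast
    have oS: "opn G H S" using K S(1) by blast
    obtain F where F: "finite F" "F \<subseteq> H" "nbhd G F x \<subseteq> S" using opnD2[OF oS S(2)] by blast
    have "S \<subseteq> \<Union>K" using S(1) by blast
    then show "\<exists>F. finite F \<and> F \<subseteq> H \<and> nbhd G F x \<subseteq> \<Union>K" using F by blast
  qed
qed

lemma openin_topH: "openin (topH G H) U \<longleftrightarrow> opn G H U"
  unfolding topH_def by (simp add: topology_inverse'[OF istop_opn])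

lemma nbhd_sub: "nbhd G F x \<subseteq> carrier G"
  unfolding nbhd_def by blast

lemma nbhd_same:
  assumes "y \<in> nbhd G F x" shows "nbhd G F y = nbhd G F x"
proof (rule Set.set_eqI)
  fix z
  have h: "\<forall>\<xi>\<in>F. \<xi> y = \<xi> x" using assms by (simp add: mem_nbhd)
  have "(\<forall>\<xi>\<in>F. \<xi> z = \<xi> y) = (\<forall>\<xi>\<in>F. \<xi> z = \<xi> x)"
  proof (rule ball_cong)
    fix \<xi> assume "\<xi> \<in> F"
    then have "\<xi> y = \<xi> x" using h by blast
    then show "(\<xi> z = \<xi> y) = (\<xi> z = \<xi> x)" by simp
  qed simp
  then show "z \<in> nbhd G F y \<longleftrightarrow> z \<in> nbhd G F x" by (simp add: mem_nbhd)
qed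

lemma topspace_topH: "topspace (topH G H) = carrier G"
proof -
  have "opn G H (carrier G)" unfolding opn_def
  proof (intro conjI ballI)
    fix x assume "x \<in> carrier G"
    have "finite {}" "{} \<subseteq> H" by auto
    moreover have "nbhd G {} x \<subseteq> carrier G" by (rule nbhd_sub)
    ultimately show "\<exists>F. finite F \<and> F \<subseteq> H \<and> nbhd G F x \<subseteq> carrier G" by blast
  qed simp
  then have "openin (topH G H) (carrier G)" by (simp add: openin_topH)
  then have "carrier G \<subseteq> topspace (topH G H)" by (rule openin_subset)
  moreover have "topspace (topH G H) \<subseteq> carrier G"
  proof
    fix x assume "x \<in> topspace (topH G H)"
    then obtain U where "openin (topH G H) U" "x \<in> U" unfolding topspace_def by blast
    then show "x \<in> carrier G" unfolding openin_topH opn_def by blast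
  qed
  ultimately show ?thesis by blast
qed

lemma nbhd_open: "finite F \<Longrightarrow> F \<subseteq> H \<Longrightarrow> openin (topH G H) (nbhd G F x)"
  unfolding openin_topH opn_def
proof (intro conjI ballI)
  assume "finite F" "F \<subseteq> H"
  show "nbhd G F x \<subseteq> carrier G" by (rule nbhd_sub)
  fix y assume "y \<in> nbhd G F x"
  then have "nbhd G F y = nbhd G F x" by (rule nbhd_same)
  then have "nbhd G F y \<subseteq> nbhd G F x" by simp
  then show "\<exists>F'. finite F' \<and> F' \<subseteq> H \<and> nbhd G F' y \<subseteq> nbhd G F x" using \<open>finite F\<close> \<open>F \<subseteq> H\<close> by blast
qed

lemma nbhd_self: "x \<in> carrier G \<Longrightarrow> x \<in> nbhd G F x"
  by (simp add: nbhd_def agree_def)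

lemma openE_topH:
  assumes "openin (topH G H) U" "x \<in> U"
  obtains F where "finite F" "F \<subseteq> H" "nbhd G F x \<subseteq> U"
  using assms unfolding openin_topH opn_def by blast

locale bgrp = group G for G :: "('g,'m) monoid_scheme" (structure) +
  fixes H :: "('g \<Rightarrow> bool) set"
  assumes hom: "\<xi> \<in> H \<Longrightarrow> x \<in> carrier G \<Longrightarrow> y \<in> carrier G \<Longrightarrow> \<xi> (x \<otimes> y) = (\<xi> x \<noteq> \<xi> y)"
begin

lemma chi_one: "\<xi> \<in> H \<Longrightarrow> \<xi> \<one> = False"
  using hom[of \<xi> \<one> \<one>] by auto

lemma chi_inv: "\<xi> \<in> H \<Longrightarrow> x \<in> carrier G \<Longrightarrow> \<xi> (inv x) = \<xi> x"
  using hom[of \<xi> x "inv x"] chi_one[of \<xi>] by auto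

lemma topgroup: "topological_group G (topH G H)"
proof -
  have c1: "continuous_map (prod_topology (topH G H) (topH G H)) (topH G H) (\<lambda>(x, y). x \<otimes> y)"
    unfolding continuous_map_def
  proof (intro conjI allI impI)
    show "(\<lambda>(x, y). x \<otimes> y) \<in> topspace (prod_topology (topH G H) (topH G H)) \<rightarrow> topspace (topH G H)"
      by (auto simp: topspace_topH)
    fix U assume U: "openin (topH G H) U"
    show "openin (prod_topology (topH G H) (topH G H))
           {z \<in> topspace (prod_topology (topH G H) (topH G H)). (case z of (x, y) \<Rightarrow> x \<otimes> y) \<in> U}"
      unfolding openin_prod_topology_alt
    proof (intro allI impI)
      fix x y assume xy: "(x, y) \<in> {z \<in> topspace (prod_topology (topH G H) (topH G H)). (case z of (x, y) \<Rightarrow> x \<otimes> y) \<in> U}"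
      then have x: "x \<in> carrier G" and y: "y \<in> carrier G" and xyU: "x \<otimes> y \<in> U"
        by (auto simp: topspace_topH)
      obtain F where F: "finite F" "F \<subseteq> H" "nbhd G F (x \<otimes> y) \<subseteq> U" using openE_topH[OF U xyU] by blast
      have "nbhd G F x \<times> nbhd G F y \<subseteq> {z \<in> topspace (prod_topology (topH G H) (topH G H)). (case z of (x, y) \<Rightarrow> x \<otimes> y) \<in> U}"
      proof
        fix z assume "z \<in> nbhd G F x \<times> nbhd G F y"
        then obtain a b where z: "z = (a, b)" "a \<in> nbhd G F x" "b \<in> nbhd G F y" by blast
        then have ab: "a \<in> carrier G" "b \<in> carrier G" by (simp_all add: mem_nbhd)
        have ha: "\<forall>\<xi>\<in>F. \<xi> a = \<xi> x" "\<forall>\<xi>\<in>F. \<xi> b = \<xi> y" using z by (simp_all add: mem_nbhd)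
        have "\<forall>\<xi>\<in>F. \<xi> (a \<otimes> b) = \<xi> (x \<otimes> y)"
        proof
          fix \<xi> assume xi: "\<xi> \<in> F"
          then have xiH: "\<xi> \<in> H" using F(2) by blast
          have "\<xi> a = \<xi> x" "\<xi> b = \<xi> y" using ha xi by simp_all
          then show "\<xi> (a \<otimes> b) = \<xi> (x \<otimes> y)"
            by (simp add: hom[OF xiH ab(1) ab(2)] hom[OF xiH x y])
        qed
        then have "a \<otimes> b \<in> nbhd G F (x \<otimes> y)" using ab by (simp add: mem_nbhd)
        then have "a \<otimes> b \<in> U" using F(3) by blast
        then show "z \<in> {z \<in> topspace (prod_topology (topH G H) (topH G H)). (case z of (x, y) \<Rightarrow> x \<otimes> y) \<in> U}"
          using z ab by (simp add: topspace_topH)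
      qed
      moreover have "openin (topH G H) (nbhd G F x)" by (rule nbhd_open[OF F(1,2)])
      moreover have "openin (topH G H) (nbhd G F y)" by (rule nbhd_open[OF F(1,2)])
      moreover have "x \<in> nbhd G F x" by (rule nbhd_self[OF x])
      moreover have "y \<in> nbhd G F y" by (rule nbhd_self[OF y])
      ultimately show "\<exists>U' V. openin (topH G H) U' \<and> openin (topH G H) V \<and> x \<in> U' \<and> y \<in> V \<and>
             U' \<times> V \<subseteq> {z \<in> topspace (prod_topology (topH G H) (topH G H)). (case z of (x, y) \<Rightarrow> x \<otimes> y) \<in> U}"
        by blast
    qed
  qed
  have c2: "continuous_map (topH G H) (topH G H) (m_inv G)"
    unfolding continuous_map_def
  proof (intro conjI allI impI)
    show "m_inv G \<in> topspace (topH G H) \<rightarrow> topspace (topH G H)" by (auto simp: topspace_topH)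
    fix U assume U: "openin (topH G H) U"
    show "openin (topH G H) {x \<in> topspace (topH G H). inv x \<in> U}"
      unfolding openin_topH
    proof (rule opnI)
      show "{x \<in> topspace (topH G H). inv x \<in> U} \<subseteq> carrier G" by (auto simp: topspace_topH)
      fix x assume "x \<in> {x \<in> topspace (topH G H). inv x \<in> U}"
      then have x: "x \<in> carrier G" and xU: "inv x \<in> U" by (auto simp: topspace_topH)
      obtain F where F: "finite F" "F \<subseteq> H" "nbhd G F (inv x) \<subseteq> U" using openE_topH[OF U xU] by blast
      have "nbhd G F x \<subseteq> {x \<in> topspace (topH G H). inv x \<in> U}"
      proof
        fix a assume a: "a \<in> nbhd G F x"
        then have ac: "a \<in> carrier G" by (simp add: mem_nbhd)
        have ha: "\<forall>\<xi>\<in>F. \<xi> a = \<xi> x" using a by (simp add: mem_nbhd)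
        have "\<forall>\<xi>\<in>F. \<xi> (inv a) = \<xi> (inv x)"
        proof
          fix \<xi> assume xi: "\<xi> \<in> F"
          then have xiH: "\<xi> \<in> H" using F(2) by blast
          have "\<xi> a = \<xi> x" using ha xi by simp
          then show "\<xi> (inv a) = \<xi> (inv x)" by (simp add: chi_inv[OF xiH ac] chi_inv[OF xiH x])
        qed
        then have "inv a \<in> nbhd G F (inv x)" using ac by (simp add: mem_nbhd)
        then have "inv a \<in> U" using F(3) by blast
        then show "a \<in> {x \<in> topspace (topH G H). inv x \<in> U}" using ac by (simp add: topspace_topH)
      qed
      then show "\<exists>F. finite F \<and> F \<subseteq> H \<and> nbhd G F x \<subseteq> {x \<in> topspace (topH G H). inv x \<in> U}"
        using F(1,2) by blast
    qed
  qed
  show ?thesis unfolding topological_group_def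
    by (intro conjI is_group topspace_topH c2) (rule c1)
qed

lemma hausdorff:
  assumes sep: "\<And>x y. x \<in> carrier G \<Longrightarrow> y \<in> carrier G \<Longrightarrow> x \<noteq> y \<Longrightarrow> \<exists>\<xi>\<in>H. \<xi> x \<noteq> \<xi> y"
  shows "Hausdorff_space (topH G H)"
  unfolding Hausdorff_space_def
proof (intro allI impI)
  fix x y assume "x \<in> topspace (topH G H) \<and> y \<in> topspace (topH G H) \<and> x \<noteq> y"
  then have x: "x \<in> carrier G" and y: "y \<in> carrier G" and ne: "x \<noteq> y" by (auto simp: topspace_topH)
  obtain \<xi> where c: "\<xi> \<in> H" "\<xi> x \<noteq> \<xi> y" using sep[OF x y ne] by blast
  have "disjnt (nbhd G {\<xi>} x) (nbhd G {\<xi>} y)"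
    unfolding disjnt_def
  proof (rule equals0I)
    fix z assume "z \<in> nbhd G {\<xi>} x \<inter> nbhd G {\<xi>} y"
    then have z1: "z \<in> nbhd G {\<xi>} x" and z2: "z \<in> nbhd G {\<xi>} y" by blast+
    have "\<xi> z = \<xi> x" using z1 by (simp add: mem_nbhd)
    moreover have "\<xi> z = \<xi> y" using z2 by (simp add: mem_nbhd)
    ultimately show False using c(2) by simp
  qed
  moreover have "openin (topH G H) (nbhd G {\<xi>} x)" by (rule nbhd_open) (use c in auto)
  moreover have "openin (topH G H) (nbhd G {\<xi>} y)" by (rule nbhd_open) (use c in auto)
  moreover have "x \<in> nbhd G {\<xi>} x" by (rule nbhd_self[OF x])
  moreover have "y \<in> nbhd G {\<xi>} y" by (rule nbhd_self[OF y])
  ultimately show "\<exists>U V. openin (topH G H) U \<and> openin (topH G H) V \<and> x \<in> U \<and> y \<in> V \<and> disjnt U V"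
    by blast
qed

lemma reps:
  fixes F :: "('g \<Rightarrow> bool) set"
  assumes "finite F"
  shows "\<exists>R. finite R \<and> R \<subseteq> carrier G \<and> (\<forall>x\<in>carrier G. \<exists>r\<in>R. \<forall>\<xi>\<in>F. \<xi> r = \<xi> x)"
proof -
  define P where "P x = {\<xi>\<in>F. \<xi> x}" for x
  define rep where "rep Q = (SOME w. w \<in> carrier G \<and> P w = Q)" for Q
  have rep: "rep (P x) \<in> carrier G \<and> P (rep (P x)) = P x" if "x \<in> carrier G" for x
    unfolding rep_def by (rule someI_ex) (use that in blast)
  have "P ` carrier G \<subseteq> Pow F" by (auto simp: P_def)
  then have "finite (P ` carrier G)" using assms by (simp add: finite_subset)
  then have "finite (rep ` (P ` carrier G))" by (rule finite_imageI)
  moreover have "rep ` (P ` carrier G) \<subseteq> carrier G" using rep by auto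
  moreover have "\<forall>x\<in>carrier G. \<exists>r\<in>rep ` (P ` carrier G). \<forall>\<xi>\<in>F. \<xi> r = \<xi> x"
  proof
    fix x assume x: "x \<in> carrier G"
    have "\<forall>\<xi>\<in>F. \<xi> (rep (P x)) = \<xi> x"
    proof
      fix \<xi> assume "\<xi> \<in> F"
      then have "\<xi> (rep (P x)) \<longleftrightarrow> \<xi> \<in> P (rep (P x))" "\<xi> x \<longleftrightarrow> \<xi> \<in> P x" by (auto simp: P_def)
      then show "\<xi> (rep (P x)) = \<xi> x" using rep[OF x] by simp
    qed
    then show "\<exists>r\<in>rep ` (P ` carrier G). \<forall>\<xi>\<in>F. \<xi> r = \<xi> x" using x by blast
  qed
  ultimately show ?thesis by blast
qed

lemma shift_in_nbhd:
  assumes F: "F \<subseteq> H" and r: "r \<in> carrier G" and x: "x \<in> carrier G" and a: "\<forall>\<xi>\<in>F. \<xi> r = \<xi> x"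
  shows "inv r \<otimes> x \<in> nbhd G F \<one>"
proof -
  have "\<forall>\<xi>\<in>F. \<xi> (inv r \<otimes> x) = \<xi> \<one>"
  proof
    fix \<xi> assume xi: "\<xi> \<in> F"
    then have xiH: "\<xi> \<in> H" using F by blast
    have "\<xi> r = \<xi> x" using a xi by simp
    then show "\<xi> (inv r \<otimes> x) = \<xi> \<one>"
      by (simp add: hom[OF xiH inv_closed[OF r] x] chi_inv[OF xiH r] chi_one[OF xiH])
  qed
  moreover have "inv r \<otimes> x \<in> carrier G" using r x by simp
  ultimately show ?thesis by (simp add: mem_nbhd)
qed

lemma precompact: "precompact_group G (topH G H)"
  unfolding precompact_group_def
proof (intro allI impI)
  fix U assume U: "openin (topH G H) U \<and> \<one> \<in> U"
  obtain F where F: "finite F" "F \<subseteq> H" "nbhd G F \<one> \<subseteq> U" using openE_topH[of G H U \<one>] U by blast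
  obtain R where R: "finite R" "R \<subseteq> carrier G" "\<forall>x\<in>carrier G. \<exists>r\<in>R. \<forall>\<xi>\<in>F. \<xi> r = \<xi> x"
    using reps[OF F(1)] by blast
  have Uc: "U \<subseteq> carrier G" using openin_subset[of "topH G H" U] U by (simp add: topspace_topH)
  have "carrier G = (\<Union>x\<in>R. x <# U)"
  proof
    show "(\<Union>x\<in>R. x <# U) \<subseteq> carrier G"
    proof
      fix z assume "z \<in> (\<Union>x\<in>R. x <# U)"
      then obtain x h where "x \<in> R" "h \<in> U" "z = x \<otimes> h" by (auto simp: l_coset_def)
      then show "z \<in> carrier G" using R(2) Uc by blast
    qed
    show "carrier G \<subseteq> (\<Union>x\<in>R. x <# U)"
    proof
      fix z assume z: "z \<in> carrier G"
      then obtain r where r: "r \<in> R" "\<forall>\<xi>\<in>F. \<xi> r = \<xi> z" using R(3) by blast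
      have rc: "r \<in> carrier G" using r R(2) by blast
      have h: "inv r \<otimes> z \<in> U" using shift_in_nbhd[OF F(2) rc z r(2)] F(3) by blast
      have "r \<otimes> (inv r \<otimes> z) = z" using rc z by (simp add: m_assoc[symmetric])
      then have "z \<in> r <# U" using h unfolding l_coset_def by force
      then show "z \<in> (\<Union>x\<in>R. x <# U)" using r(1) by blast
    qed
  qed
  then show "\<exists>F. finite F \<and> F \<subseteq> carrier G \<and> carrier G = (\<Union>x\<in>F. x <# U)" using R by blast
qed

lemma pseudo_le:
  assumes S: "S \<subseteq> H" "S \<noteq> {}"
    and sep: "\<forall>x\<in>carrier G. \<forall>y\<in>carrier G. (\<forall>\<xi>\<in>S. \<xi> x = \<xi> y) \<longrightarrow> x = y"
    and x: "x \<in> carrier G" and r: "|S| \<le>o r"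
  shows "pseudochar_at_le (topH G H) x r"
proof -
  let ?U = "(\<lambda>\<xi>. nbhd G {\<xi>} x) ` S"
  have o: "\<forall>U\<in>?U. openin (topH G H) U"
  proof
    fix U assume "U \<in> ?U"
    then obtain \<xi> where xi: "\<xi> \<in> S" "U = nbhd G {\<xi>} x" by blast
    have "{\<xi>} \<subseteq> H" using xi(1) S(1) by blast
    then show "openin (topH G H) U" unfolding xi(2) by (intro nbhd_open) simp_all
  qed
  have i: "\<Inter>?U = {x}"
  proof
    show "{x} \<subseteq> \<Inter>?U" using nbhd_self[OF x] by blast
    show "\<Inter>?U \<subseteq> {x}"
    proof
      fix y assume y: "y \<in> \<Inter>?U"
      obtain \<xi>0 where "\<xi>0 \<in> S" using S(2) by blast
      then have "y \<in> nbhd G {\<xi>0} x" using y by blast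
      then have yc: "y \<in> carrier G" by (simp add: mem_nbhd)
      have "\<forall>\<xi>\<in>S. \<xi> y = \<xi> x"
      proof
        fix \<xi> assume "\<xi> \<in> S"
        then have "y \<in> nbhd G {\<xi>} x" using y by blast
        then show "\<xi> y = \<xi> x" by (simp add: mem_nbhd)
      qed
      then have "y = x" using sep yc x by blast
      then show "y \<in> {x}" by simp
    qed
  qed
  have "|?U| \<le>o |S|" by (rule card_of_image)
  then have c: "|?U| \<le>o r" by (rule ordLeq_transitive[OF _ r])
  show ?thesis unfolding pseudochar_at_le_def
    by (intro exI[of _ ?U] conjI o i c)
qed

lemma pseudo_ge:
  assumes A: "infinite A"
    and ker: "\<And>S. S \<subseteq> H \<Longrightarrow> |S| <o |A| \<Longrightarrow> \<exists>x\<in>carrier G. x \<noteq> \<one> \<and> (\<forall>\<xi>\<in>S. \<xi> x = False)"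
    and p: "pseudochar_at_le (topH G H) \<one> r"
  shows "|A| \<le>o r"
proof (rule ccontr)
  assume nr: "\<not> |A| \<le>o r"
  obtain UU where U: "\<forall>U\<in>UU. openin (topH G H) U" "\<Inter>UU = {\<one>}" "|UU| \<le>o r"
    using p unfolding pseudochar_at_le_def by blast
  have "\<not> |A| \<le>o |UU|"
  proof
    assume "|A| \<le>o |UU|"
    then have "|A| \<le>o r" by (rule ordLeq_transitive[OF _ U(3)])
    with nr show False by simp
  qed
  then have less: "|UU| <o |A|" by (rule not_leq_less)
  define FU where "FU U = (SOME F. finite F \<and> F \<subseteq> H \<and> nbhd G F \<one> \<subseteq> U)" for U
  have FU: "finite (FU U) \<and> FU U \<subseteq> H \<and> nbhd G (FU U) \<one> \<subseteq> U" if "U \<in> UU" for U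
  proof -
    have "\<one> \<in> U" using U(2) that by blast
    have "openin (topH G H) U" using U(1) that by blast
    then obtain F where "finite F" "F \<subseteq> H" "nbhd G F \<one> \<subseteq> U" using openE_topH \<open>\<one> \<in> U\<close> by metis
    then have "\<exists>F. finite F \<and> F \<subseteq> H \<and> nbhd G F \<one> \<subseteq> U" by blast
    then show ?thesis unfolding FU_def by (rule someI_ex)
  qed
  define S where "S = (\<Union>U\<in>UU. FU U)"
  have SH: "S \<subseteq> H" unfolding S_def using FU by blast
  have "|S| <o |A|" unfolding S_def
    by (rule small_union[OF A less]) (use FU in blast)
  then obtain x where x: "x \<in> carrier G" "x \<noteq> \<one>" "\<forall>\<xi>\<in>S. \<xi> x = False" using ker[OF SH] by blast
  have "x \<in> \<Inter>UU"
  proof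
    fix U assume U': "U \<in> UU"
    have "\<forall>\<xi>\<in>FU U. \<xi> x = \<xi> \<one>"
    proof
      fix \<xi> assume xi: "\<xi> \<in> FU U"
      then have "\<xi> \<in> S" using U' unfolding S_def by blast
      then have "\<xi> x = False" "\<xi> \<in> H" using x(3) SH by blast+
      then show "\<xi> x = \<xi> \<one>" using chi_one by simp
    qed
    then have "x \<in> nbhd G (FU U) \<one>" using x(1) by (simp add: mem_nbhd)
    then show "x \<in> U" using FU[OF U'] by blast
  qed
  then show False using U(2) x(2) by blast
qed

lemma density_ge:
  assumes K: "infinite K" and f: "\<And>k. k \<in> K \<Longrightarrow> f k \<in> H"
    and w: "\<And>k. k \<in> K \<Longrightarrow> w k \<in> carrier G \<and> f k (w k)"
    and supp: "\<And>x. x \<in> carrier G \<Longrightarrow> finite {k\<in>K. f k x}"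
    and D: "dense_in (topH G H) D"
  shows "|K| \<le>o |D|"
proof (rule ccontr)
  assume "\<not> |K| \<le>o |D|"
  then have less: "|D| <o |K|" by (rule not_leq_less)
  have DC: "D \<subseteq> carrier G" and cl: "topH G H closure_of D = carrier G"
    using D by (simp_all add: dense_in_def topspace_topH)
  have cover: "K \<subseteq> (\<Union>d\<in>D. {k\<in>K. f k d})"
  proof
    fix k assume k: "k \<in> K"
    have wk: "w k \<in> carrier G" "f k (w k)" using w[OF k] by auto
    have "w k \<in> topH G H closure_of D" using cl wk(1) by simp
    then have cl2: "\<forall>T. w k \<in> T \<and> openin (topH G H) T \<longrightarrow> (\<exists>y. y \<in> D \<and> y \<in> T)"
      by (simp add: in_closure_of)
    have "openin (topH G H) (nbhd G {f k} (w k))" by (rule nbhd_open) (use f[OF k] in auto)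
    moreover have "w k \<in> nbhd G {f k} (w k)" by (rule nbhd_self[OF wk(1)])
    ultimately obtain y where y: "y \<in> D" "y \<in> nbhd G {f k} (w k)" using cl2 by blast
    then have "f k y = f k (w k)" by (simp add: mem_nbhd)
    then have "f k y" using wk(2) by simp
    then show "k \<in> (\<Union>d\<in>D. {k\<in>K. f k d})" using y(1) k by blast
  qed
  have "|\<Union>d\<in>D. {k\<in>K. f k d}| <o |K|"
    by (rule small_union[OF K less]) (use supp DC in blast)
  then have "|K| <o |K|" by (rule ordLeq_ordLess_trans[OF card_of_mono1[OF cover]])
  then show False using ordLess_irreflexive by blast
qed

lemma weight_ge:
  assumes K: "infinite K" "K \<subseteq> H"
    and dist: "\<And>\<xi> \<xi>'. \<xi> \<in> K \<Longrightarrow> \<xi>' \<in> K \<Longrightarrow> (\<forall>x\<in>carrier G. \<xi> x = \<xi>' x) \<Longrightarrow> \<xi> = \<xi>'"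
    and B: "base_of (topH G H) B"
  shows "|K| \<le>o |B|"
proof (rule ccontr)
  assume "\<not> |K| \<le>o |B|"
  then have less0: "|B| <o |K|" by (rule not_leq_less)
  define B' where "B' = {b\<in>B. \<one> \<in> b}"
  have "|B'| \<le>o |B|" unfolding B'_def by (rule card_of_mono1) blast
  then have less: "|B'| <o |K|" by (rule ordLeq_ordLess_trans[OF _ less0])
  have Bo: "\<forall>U\<in>B. openin (topH G H) U" and Bb: "\<forall>U. openin (topH G H) U \<longrightarrow> (\<exists>B0\<subseteq>B. \<Union>B0 = U)"
    using B unfolding base_of_def by blast+
  define FB where "FB b = (SOME F. finite F \<and> F \<subseteq> H \<and> nbhd G F \<one> \<subseteq> b)" for b
  have FB: "finite (FB b) \<and> FB b \<subseteq> H \<and> nbhd G (FB b) \<one> \<subseteq> b" if "b \<in> B'" for b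
  proof -
    have "\<one> \<in> b" "b \<in> B" using that unfolding B'_def by blast+
    then have "openin (topH G H) b" using Bo by blast
    then obtain F where "finite F" "F \<subseteq> H" "nbhd G F \<one> \<subseteq> b" using openE_topH \<open>\<one> \<in> b\<close> by metis
    then have "\<exists>F. finite F \<and> F \<subseteq> H \<and> nbhd G F \<one> \<subseteq> b" by blast
    then show ?thesis unfolding FB_def by (rule someI_ex)
  qed
  define fib where "fib b = {\<xi>\<in>K. \<forall>y\<in>b. \<not> \<xi> y}" for b
  have cover: "K \<subseteq> (\<Union>b\<in>B'. fib b)"
  proof
    fix \<xi> assume xi: "\<xi> \<in> K"
    then have xiH: "\<xi> \<in> H" using K(2) by blast
    have "{\<xi>} \<subseteq> H" using xiH by simp
    then have op: "openin (topH G H) (nbhd G {\<xi>} \<one>)" by (intro nbhd_open) simp_all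
    have "\<exists>B0\<subseteq>B. \<Union>B0 = nbhd G {\<xi>} \<one>" using Bb[rule_format, OF op] .
    then obtain B0 where B0': "B0 \<subseteq> B \<and> \<Union>B0 = nbhd G {\<xi>} \<one>" ..
    then have B0: "B0 \<subseteq> B" "\<Union>B0 = nbhd G {\<xi>} \<one>" by simp_all
    have "\<one> \<in> nbhd G {\<xi>} \<one>" by (rule nbhd_self) simp
    then have "\<one> \<in> \<Union>B0" by (simp only: B0(2))
    then obtain b where b: "b \<in> B0" "\<one> \<in> b" by (rule UnionE)
    have "b \<subseteq> \<Union>B0" using b(1) by (rule Union_upper)
    then have bsub: "b \<subseteq> nbhd G {\<xi>} \<one>" by (simp only: B0(2))
    have "\<forall>y\<in>b. \<not> \<xi> y"
    proof
      fix y assume "y \<in> b"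
      then have "y \<in> nbhd G {\<xi>} \<one>" using bsub by blast
      then have "\<xi> y = \<xi> \<one>" by (simp add: mem_nbhd)
      then show "\<not> \<xi> y" using chi_one[OF xiH] by simp
    qed
    then have "\<xi> \<in> fib b" using xi by (simp add: fib_def)
    moreover have "b \<in> B'" using b B0(1) unfolding B'_def by blast
    ultimately show "\<xi> \<in> (\<Union>b\<in>B'. fib b)" by blast
  qed
  have fin: "finite (fib b)" if bB: "b \<in> B'" for b
  proof -
    have F: "finite (FB b)" "FB b \<subseteq> H" "nbhd G (FB b) \<one> \<subseteq> b" using FB[OF bB] by blast+
    obtain R where R: "finite R" "R \<subseteq> carrier G" "\<forall>x\<in>carrier G. \<exists>r\<in>R. \<forall>\<xi>\<in>FB b. \<xi> r = \<xi> x"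
      using reps[OF F(1)] by blast
    define g where "g \<xi> = {r\<in>R. \<xi> r}" for \<xi> :: "'g \<Rightarrow> bool"
    have key: "\<xi> x = \<xi> r" if xi: "\<xi> \<in> fib b" and x: "x \<in> carrier G" and r: "r \<in> R"
      and rx: "\<forall>\<eta>\<in>FB b. \<eta> r = \<eta> x" for \<xi> x r
    proof -
      have rc: "r \<in> carrier G" using r R(2) by blast
      have xiH: "\<xi> \<in> H" using xi K(2) unfolding fib_def by blast
      have "inv r \<otimes> x \<in> b" using shift_in_nbhd[OF F(2) rc x rx] F(3) by blast
      then have "\<not> \<xi> (inv r \<otimes> x)" using xi by (simp add: fib_def)
      then show ?thesis by (simp add: hom[OF xiH inv_closed[OF rc] x] chi_inv[OF xiH rc])
    qed
    have "inj_on g (fib b)"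
    proof (rule inj_onI)
      fix \<xi> \<xi>' assume xi: "\<xi> \<in> fib b" and xi': "\<xi>' \<in> fib b" and eq: "g \<xi> = g \<xi>'"
      have "\<forall>x\<in>carrier G. \<xi> x = \<xi>' x"
      proof
        fix x assume x: "x \<in> carrier G"
        then obtain r where r: "r \<in> R" "\<forall>\<eta>\<in>FB b. \<eta> r = \<eta> x" using R(3) by blast
        have "\<xi> r = \<xi>' r"
        proof -
          have "\<xi> r \<longleftrightarrow> r \<in> g \<xi>" using r(1) by (simp add: g_def)
          also have "\<dots> \<longleftrightarrow> r \<in> g \<xi>'" using eq by simp
          also have "\<dots> \<longleftrightarrow> \<xi>' r" using r(1) by (simp add: g_def)
          finally show ?thesis by simp
        qed
        then show "\<xi> x = \<xi>' x" using key[OF xi x r] key[OF xi' x r] by simp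
      qed
      moreover have "\<xi> \<in> K" "\<xi>' \<in> K" using xi xi' unfolding fib_def by blast+
      ultimately show "\<xi> = \<xi>'" by (intro dist)
    qed
    moreover have "g ` fib b \<subseteq> Pow R" unfolding g_def by blast
    then have "finite (g ` fib b)" using R(1) by (simp add: finite_subset)
    ultimately show ?thesis by (metis finite_imageD)
  qed
  have "|\<Union>b\<in>B'. fib b| <o |K|"
    by (rule small_union[OF K(1) less]) (use fin in blast)
  then have "|K| <o |K|" by (rule ordLeq_ordLess_trans[OF card_of_mono1[OF cover]])
  then show False using ordLess_irreflexive by blast
qed

end


section \<open>The concrete model\<close>

definition sd :: "'b set \<Rightarrow> 'b set \<Rightarrow> 'b set" where
  "sd P Q = (P - Q) \<union> (Q - P)"

lemma odd_card_sd:
  assumes P: "finite P" and Q: "finite Q"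
  shows "odd (card (sd P Q)) = (odd (card P) \<noteq> odd (card Q))"
proof -
  have d: "(P - Q) \<inter> (Q - P) = {}" by blast
  have c: "card (sd P Q) = card (P - Q) + card (Q - P)"
    unfolding sd_def by (rule card_Un_disjoint) (use P Q d in auto)
  have c1: "card (P - Q) = card P - card (P \<inter> Q)" by (rule card_Diff_subset_Int) (use P in simp)
  have c2: "card (Q - P) = card Q - card (Q \<inter> P)" by (rule card_Diff_subset_Int) (use Q in simp)
  have i: "Q \<inter> P = P \<inter> Q" by blast
  have l1: "card (P \<inter> Q) \<le> card P" by (rule card_mono) (use P in auto)
  have l2: "card (P \<inter> Q) \<le> card Q" by (rule card_mono) (use Q in auto)
  show ?thesis using c c1 c2 l1 l2 unfolding i by presburger
qed

lemma sd_filter: "{Z \<in> sd P Q. \<phi> Z} = sd {Z\<in>P. \<phi> Z} {Z\<in>Q. \<phi> Z}"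
  unfolding sd_def by blast

lemma sd_assoc: "sd (sd P Q) R = sd P (sd Q R)"
  unfolding sd_def by blast

lemma sd_comm: "sd P Q = sd Q P"
  unfolding sd_def by blast

lemma sd_empty: "sd {} P = P" "sd P P = {}"
  unfolding sd_def by blast+

lemma sep_fin:
  assumes S: "finite S" "S \<noteq> {}" "S \<subseteq> Pow A"
  shows "\<exists>F\<in>Fpow A. card {Y\<in>S. F \<subseteq> Y} = 1"
proof -
  obtain Y0 where Y0: "Y0 \<in> S" "\<forall>Y\<in>S. Y0 \<subseteq> Y \<longrightarrow> Y0 = Y"
    using finite_has_maximal[OF S(1) S(2)] by blast
  define pick where "pick Y = (SOME a. a \<in> Y0 \<and> a \<notin> Y)" for Y
  have pick: "pick Y \<in> Y0 \<and> pick Y \<notin> Y" if "Y \<in> S" "Y \<noteq> Y0" for Y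
  proof -
    have "\<not> Y0 \<subseteq> Y" using Y0(2) that by blast
    then have "\<exists>a. a \<in> Y0 \<and> a \<notin> Y" by blast
    then show ?thesis unfolding pick_def by (rule someI_ex)
  qed
  define F where "F = pick ` (S - {Y0})"
  have FY0: "F \<subseteq> Y0" unfolding F_def using pick by blast
  have "Y0 \<subseteq> A" using Y0(1) S(3) by blast
  then have "F \<in> Fpow A" using FY0 S(1) unfolding Fpow_def F_def by auto
  moreover have "{Y\<in>S. F \<subseteq> Y} = {Y0}"
  proof
    show "{Y0} \<subseteq> {Y\<in>S. F \<subseteq> Y}" using Y0(1) FY0 by blast
    show "{Y\<in>S. F \<subseteq> Y} \<subseteq> {Y0}"
    proof
      fix Y assume Y: "Y \<in> {Y\<in>S. F \<subseteq> Y}"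
      show "Y \<in> {Y0}"
      proof (rule ccontr)
        assume "Y \<notin> {Y0}"
        then have ne: "Y \<noteq> Y0" by simp
        have YS: "Y \<in> S" using Y by simp
        have "pick Y \<in> F" unfolding F_def using YS ne by blast
        then have "pick Y \<in> Y" using Y by blast
        then show False using pick[OF YS ne] by blast
      qed
    qed
  qed
  ultimately show ?thesis by (intro bexI[of _ F]) simp_all
qed

locale model =
  fixes A :: "'a set" and e :: "'a set set \<Rightarrow> 'a set"
  assumes inf: "infinite A" and bij: "bij_betw e (Fpow (Pow A)) (Pow A)"
begin

definition e' :: "'a set \<Rightarrow> 'a set set" where
  "e' Xa = inv_into (Fpow (Pow A)) e Xa"

definition GG :: "'a set monoid" where
  "GG = \<lparr>carrier = Pow A, mult = (\<lambda>Xa Y. e (sd (e' Xa) (e' Y))), one = e {}\<rparr>"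

definition chi :: "('a set \<Rightarrow> bool) \<Rightarrow> 'a set \<Rightarrow> bool" where
  "chi \<phi> Xa = odd (card {Z \<in> e' Xa. \<phi> Z})"

definition InfA :: "'a set set" where
  "InfA = {Y \<in> Pow A. infinite Y}"

definition Phi :: "('a set \<Rightarrow> bool) set" where
  "Phi = (\<lambda>F. \<lambda>Y. F \<subseteq> Y) ` Fpow A \<union> (\<lambda>W. \<lambda>Z. Z \<in> W) ` Pow InfA"

definition HH :: "('a set \<Rightarrow> bool) set" where
  "HH = chi ` Phi"

lemma M_iff: "m \<in> Fpow (Pow A) \<longleftrightarrow> m \<subseteq> Pow A \<and> finite m"
  by (simp add: Fpow_def)

lemma e'_in: "Xa \<in> Pow A \<Longrightarrow> e' Xa \<in> Fpow (Pow A)"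
  unfolding e'_def using bij_betw_inv_into[OF bij] bij_betwE by blast

lemma e_e': "Xa \<in> Pow A \<Longrightarrow> e (e' Xa) = Xa"
  unfolding e'_def by (rule bij_betw_inv_into_right[OF bij])

lemma e'_e: "m \<in> Fpow (Pow A) \<Longrightarrow> e' (e m) = m"
  unfolding e'_def by (rule bij_betw_inv_into_left[OF bij])

lemma e_in: "m \<in> Fpow (Pow A) \<Longrightarrow> e m \<in> Pow A"
  using bij bij_betwE by blast

lemma e_inj: "m \<in> Fpow (Pow A) \<Longrightarrow> m' \<in> Fpow (Pow A) \<Longrightarrow> e m = e m' \<Longrightarrow> m = m'"
  using bij_betw_imp_inj_on[OF bij] by (rule inj_onD)

lemma sd_M: "P \<in> Fpow (Pow A) \<Longrightarrow> Q \<in> Fpow (Pow A) \<Longrightarrow> sd P Q \<in> Fpow (Pow A)"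
  unfolding M_iff sd_def by auto

lemma empty_M: "{} \<in> Fpow (Pow A)"
  by (simp add: M_iff)

lemma carrier_GG [simp]: "carrier GG = Pow A"
  by (simp add: GG_def)

lemma mult_GG [simp]: "Xa \<otimes>\<^bsub>GG\<^esub> Y = e (sd (e' Xa) (e' Y))"
  by (simp add: GG_def)

lemma one_GG [simp]: "\<one>\<^bsub>GG\<^esub> = e {}"
  by (simp add: GG_def)

lemma comm_GG: "comm_group GG"
proof (rule comm_groupI)
  fix x y assume x: "x \<in> carrier GG" and y: "y \<in> carrier GG"
  have "e (sd (e' x) (e' y)) \<in> Pow A"
    using x y by (intro e_in sd_M e'_in) simp_all
  then show "x \<otimes>\<^bsub>GG\<^esub> y \<in> carrier GG" by simp
next
  show "\<one>\<^bsub>GG\<^esub> \<in> carrier GG" using e_in[OF empty_M] by simp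
next
  fix x y z assume x: "x \<in> carrier GG" and y: "y \<in> carrier GG" and z: "z \<in> carrier GG"
  have "e' (e (sd (e' x) (e' y))) = sd (e' x) (e' y)" using x y by (simp add: e'_e sd_M e'_in)
  moreover have "e' (e (sd (e' y) (e' z))) = sd (e' y) (e' z)" using y z by (simp add: e'_e sd_M e'_in)
  ultimately show "x \<otimes>\<^bsub>GG\<^esub> y \<otimes>\<^bsub>GG\<^esub> z = x \<otimes>\<^bsub>GG\<^esub> (y \<otimes>\<^bsub>GG\<^esub> z)"
    by (simp add: sd_assoc)
next
  fix x y assume "x \<in> carrier GG" "y \<in> carrier GG"
  show "x \<otimes>\<^bsub>GG\<^esub> y = y \<otimes>\<^bsub>GG\<^esub> x" by (simp add: sd_comm)
next
  fix x assume x: "x \<in> carrier GG"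
  show "\<one>\<^bsub>GG\<^esub> \<otimes>\<^bsub>GG\<^esub> x = x" using x by (simp add: e'_e empty_M sd_empty e_e')
next
  fix x assume x: "x \<in> carrier GG"
  have "x \<otimes>\<^bsub>GG\<^esub> x = \<one>\<^bsub>GG\<^esub>" by (simp add: sd_empty)
  then show "\<exists>y\<in>carrier GG. y \<otimes>\<^bsub>GG\<^esub> x = \<one>\<^bsub>GG\<^esub>" using x by blast
qed

lemma group_GG: "group GG"
  using comm_GG by (simp add: comm_group_def)

lemma chi_hom:
  assumes Xa: "Xa \<in> Pow A" and Y: "Y \<in> Pow A"
  shows "chi \<phi> (Xa \<otimes>\<^bsub>GG\<^esub> Y) = (chi \<phi> Xa \<noteq> chi \<phi> Y)"
proof -
  have "e' (Xa \<otimes>\<^bsub>GG\<^esub> Y) = sd (e' Xa) (e' Y)" using Xa Y by (simp add: e'_e sd_M e'_in)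
  then have "chi \<phi> (Xa \<otimes>\<^bsub>GG\<^esub> Y) = odd (card (sd {Z\<in>e' Xa. \<phi> Z} {Z\<in>e' Y. \<phi> Z}))"
    by (simp add: chi_def sd_filter)
  also have "\<dots> = (odd (card {Z\<in>e' Xa. \<phi> Z}) \<noteq> odd (card {Z\<in>e' Y. \<phi> Z}))"
  proof (rule odd_card_sd)
    show "finite {Z\<in>e' Xa. \<phi> Z}" using e'_in[OF Xa] by (simp add: M_iff)
    show "finite {Z\<in>e' Y. \<phi> Z}" using e'_in[OF Y] by (simp add: M_iff)
  qed
  finally show ?thesis by (simp add: chi_def)
qed

lemma bgrp_GG: "bgrp GG HH"
proof (rule bgrp.intro[OF group_GG], rule bgrp_axioms.intro)
  fix \<xi> x y assume "\<xi> \<in> HH" "x \<in> carrier GG" "y \<in> carrier GG"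
  then show "\<xi> (x \<otimes>\<^bsub>GG\<^esub> y) = (\<xi> x \<noteq> \<xi> y)" unfolding HH_def using chi_hom by auto
qed

lemma chi_e: "m \<in> Fpow (Pow A) \<Longrightarrow> chi \<phi> (e m) = odd (card {Z\<in>m. \<phi> Z})"
  by (simp add: chi_def e'_e)

definition S0 :: "('a set \<Rightarrow> bool) set" where
  "S0 = (\<lambda>F. chi (\<lambda>Y. F \<subseteq> Y)) ` Fpow A"

lemma S0_HH: "S0 \<subseteq> HH"
  unfolding S0_def HH_def Phi_def by blast

lemma S0_ne: "S0 \<noteq> {}"
  unfolding S0_def using Fpow_not_empty by blast

lemma S0_card: "|S0| \<le>o |A|"
  unfolding S0_def by (rule ordLeq_transitive[OF card_of_image Fpow_card[OF inf]])

lemma S0_sep: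
  assumes Xa: "Xa \<in> Pow A" and Y: "Y \<in> Pow A" and ne: "Xa \<noteq> Y"
  shows "\<exists>\<xi>\<in>S0. \<xi> Xa \<noteq> \<xi> Y"
proof -
  have "e' Xa \<noteq> e' Y"
  proof
    assume "e' Xa = e' Y"
    then have "e (e' Xa) = e (e' Y)" by simp
    then show False using ne e_e'[OF Xa] e_e'[OF Y] by simp
  qed
  then have "sd (e' Xa) (e' Y) \<noteq> {}" unfolding sd_def by blast
  moreover have "sd (e' Xa) (e' Y) \<in> Fpow (Pow A)" by (rule sd_M[OF e'_in[OF Xa] e'_in[OF Y]])
  ultimately obtain F where F: "F \<in> Fpow A" "card {Z\<in>sd (e' Xa) (e' Y). F \<subseteq> Z} = 1"
    using sep_fin[of "sd (e' Xa) (e' Y)" A] by (auto simp: M_iff)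
  have "chi (\<lambda>Z. F \<subseteq> Z) (Xa \<otimes>\<^bsub>GG\<^esub> Y) = odd (card {Z\<in>sd (e' Xa) (e' Y). F \<subseteq> Z})"
    using Xa Y by (simp add: chi_def e'_e sd_M e'_in)
  then have "chi (\<lambda>Z. F \<subseteq> Z) (Xa \<otimes>\<^bsub>GG\<^esub> Y)" using F(2) by simp
  then have "chi (\<lambda>Z. F \<subseteq> Z) Xa \<noteq> chi (\<lambda>Z. F \<subseteq> Z) Y" using chi_hom[OF Xa Y] by simp
  moreover have "chi (\<lambda>Z. F \<subseteq> Z) \<in> S0" unfolding S0_def using F(1) by blast
  ultimately show ?thesis by blast
qed

lemma ker:
  assumes SH: "S \<subseteq> HH" and Sc: "|S| <o |A|"
  shows "\<exists>x\<in>carrier GG. x \<noteq> \<one>\<^bsub>GG\<^esub> \<and> (\<forall>\<xi>\<in>S. \<xi> x = False)"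
proof -
  define P where "P \<xi> F \<longleftrightarrow> F \<in> Fpow A \<and> \<xi> = chi (\<lambda>Y. F \<subseteq> Y)" for \<xi> F
  define sel where "sel \<xi> = (if \<exists>F. P \<xi> F then (SOME F. P \<xi> F) else {})" for \<xi>
  have sel1: "P \<xi> (sel \<xi>)" if "\<exists>F. P \<xi> F" for \<xi>
    unfolding sel_def using that by (simp add: someI_ex)
  have self: "finite (sel \<xi>)" for \<xi>
  proof (cases "\<exists>F. P \<xi> F")
    case True then show ?thesis using sel1[OF True] by (simp add: P_def Fpow_def)
  next
    case False then show ?thesis by (simp add: sel_def)
  qed
  define B where "B = (\<Union>\<xi>\<in>S. sel \<xi>)"
  have Bc: "|B| <o |A|" unfolding B_def by (rule small_union[OF inf Sc]) (use self in blast)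
  have "\<not> A \<subseteq> B"
  proof
    assume "A \<subseteq> B"
    then have "|A| \<le>o |B|" by (rule card_of_mono1)
    then have "|A| <o |A|" by (rule ordLeq_ordLess_trans[OF _ Bc])
    then show False using ordLess_irreflexive by blast
  qed
  then obtain a where a: "a \<in> A" "a \<notin> B" by blast
  define m :: "'a set set" where "m = {{}, {a}}"
  have mM: "m \<in> Fpow (Pow A)" using a(1) by (simp add: m_def M_iff)
  have ne: "e m \<noteq> e {}"
  proof
    assume "e m = e {}"
    then have "m = {}" by (rule e_inj[OF mM empty_M])
    then show False by (simp add: m_def)
  qed
  have "\<forall>\<xi>\<in>S. \<xi> (e m) = False"
  proof
    fix \<xi> assume xi: "\<xi> \<in> S"
    then obtain \<phi> where phi: "\<phi> \<in> Phi" "\<xi> = chi \<phi>" using SH unfolding HH_def by blast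
    show "\<xi> (e m) = False"
    proof (cases "\<phi> \<in> (\<lambda>F. \<lambda>Y. F \<subseteq> Y) ` Fpow A")
      case True
      then obtain F where "F \<in> Fpow A" "\<phi> = (\<lambda>Y. F \<subseteq> Y)" by blast
      then have "P \<xi> F" using phi(2) by (simp add: P_def)
      then have Psel: "P \<xi> (sel \<xi>)" using sel1 by blast
      define F' where "F' = sel \<xi>"
      have xiF': "\<xi> = chi (\<lambda>Y. F' \<subseteq> Y)" using Psel by (simp add: P_def F'_def)
      have "F' \<subseteq> B" unfolding B_def F'_def using xi by blast
      then have aF: "a \<notin> F'" using a(2) by blast
      have "\<xi> (e m) = odd (card {Z\<in>m. F' \<subseteq> Z})" using xiF' chi_e[OF mM] by simp
      moreover have "{Z\<in>m. F' \<subseteq> Z} = (if F' = {} then m else {})"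
        using aF unfolding m_def by auto
      moreover have "card m = 2" unfolding m_def by simp
      ultimately show ?thesis by simp
    next
      case False
      then have "\<phi> \<in> (\<lambda>W. \<lambda>Z. Z \<in> W) ` Pow InfA" using phi(1) unfolding Phi_def by blast
      then obtain W where W: "W \<subseteq> InfA" "\<phi> = (\<lambda>Z. Z \<in> W)" by blast
      have emp: "{Z\<in>m. \<phi> Z} = {}" using W unfolding m_def InfA_def by auto
      have "\<xi> (e m) = odd (card {Z\<in>m. \<phi> Z})" using phi(2) chi_e[OF mM] by simp
      also have "\<dots> = False" by (simp only: emp card.empty) simp
      finally show ?thesis .
    qed
  qed
  moreover have "e m \<in> carrier GG" using e_in[OF mM] by simp
  ultimately show ?thesis using ne by auto
qed

lemma PowA_inf: "infinite (Pow A)"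
  using inf by simp

lemma InfA_big: "|Pow A| \<le>o |InfA|"
proof (rule ccontr)
  assume "\<not> |Pow A| \<le>o |InfA|"
  then have l1: "|InfA| <o |Pow A|" by (rule not_leq_less)
  have l2: "|Fpow A| <o |Pow A|" by (rule ordLeq_ordLess_trans[OF Fpow_card[OF inf] card_of_Pow])
  have "|Fpow A \<union> InfA| <o |Pow A|" by (rule card_of_Un_ordLess_infinite[OF PowA_inf l2 l1])
  moreover have "Pow A \<subseteq> Fpow A \<union> InfA" unfolding InfA_def Fpow_def by blast
  then have "|Pow A| \<le>o |Fpow A \<union> InfA|" by (rule card_of_mono1)
  ultimately have "|Pow A| <o |Pow A|" using ordLeq_ordLess_trans by blast
  then show False using ordLess_irreflexive by blast
qed

lemma density:
  assumes D: "dense_in (topH GG HH) D"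
  shows "|Pow A| \<le>o |D|"
proof -
  interpret B: bgrp GG HH by (rule bgrp_GG)
  have "|InfA| \<le>o |D|"
  proof (rule B.density_ge[where f = "\<lambda>Y. chi (\<lambda>Z. Z \<in> {Y})" and w = "\<lambda>Y. e {Y}"])
    show "infinite InfA" using card_of_ordLeq_infinite[OF InfA_big PowA_inf] .
    fix k assume k: "k \<in> InfA"
    show "chi (\<lambda>Z. Z \<in> {k}) \<in> HH" unfolding HH_def Phi_def using k by blast
    have kM: "{k} \<in> Fpow (Pow A)" using k by (simp add: M_iff InfA_def)
    show "e {k} \<in> carrier GG \<and> chi (\<lambda>Z. Z \<in> {k}) (e {k})"
      using e_in[OF kM] chi_e[OF kM] by simp
  next
    fix x assume x: "x \<in> carrier GG"
    have "{k \<in> InfA. chi (\<lambda>Z. Z \<in> {k}) x} \<subseteq> e' x"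
    proof
      fix k assume "k \<in> {k \<in> InfA. chi (\<lambda>Z. Z \<in> {k}) x}"
      then have "odd (card {Z\<in>e' x. Z \<in> {k}})" by (simp add: chi_def)
      then have "{Z\<in>e' x. Z \<in> {k}} \<noteq> {}" by (metis card.empty even_zero)
      then show "k \<in> e' x" by blast
    qed
    moreover have "finite (e' x)" using e'_in[of x] x by (simp add: M_iff)
    ultimately show "finite {k \<in> InfA. chi (\<lambda>Z. Z \<in> {k}) x}" by (rule finite_subset)
  qed (rule D)
  then show ?thesis by (rule ordLeq_transitive[OF InfA_big])
qed

lemma weight:
  assumes Bs: "base_of (topH GG HH) B"
  shows "|Pow (Pow A)| \<le>o |B|"
proof -
  interpret Bg: bgrp GG HH by (rule bgrp_GG)
  define K where "K = (\<lambda>W. chi (\<lambda>Z. Z \<in> W)) ` Pow InfA"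
  have ev: "chi (\<lambda>Z. Z \<in> W) (e {Y}) = (Y \<in> W)" if "Y \<in> InfA" for W Y
  proof -
    have kM: "{Y} \<in> Fpow (Pow A)" using that by (simp add: M_iff InfA_def)
    have s: "{Z\<in>{Y}. Z \<in> W} = (if Y \<in> W then {Y} else {})" by auto
    have "chi (\<lambda>Z. Z \<in> W) (e {Y}) = odd (card {Z\<in>{Y}. Z \<in> W})" by (rule chi_e[OF kM])
    also have "\<dots> = odd (card (if Y \<in> W then {Y} else {}))" unfolding s ..
    also have "\<dots> = (Y \<in> W)" by simp
    finally show ?thesis .
  qed
  have eqW: "W = W'" if W: "W \<subseteq> InfA" "W' \<subseteq> InfA"
    and ag: "\<forall>x\<in>Pow A. chi (\<lambda>Z. Z \<in> W) x = chi (\<lambda>Z. Z \<in> W') x" for W W'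
  proof (rule Set.set_eqI)
    fix Y
    show "Y \<in> W \<longleftrightarrow> Y \<in> W'"
    proof (cases "Y \<in> InfA")
      case True
      have "e {Y} \<in> Pow A" using True e_in[of "{Y}"] by (simp add: M_iff InfA_def)
      then have "chi (\<lambda>Z. Z \<in> W) (e {Y}) = chi (\<lambda>Z. Z \<in> W') (e {Y})" using ag by blast
      then show ?thesis using ev[OF True, of W] ev[OF True, of W'] by simp
    next
      case False then show ?thesis using W by blast
    qed
  qed
  have inj: "inj_on (\<lambda>W. chi (\<lambda>Z. Z \<in> W)) (Pow InfA)"
  proof (rule inj_onI)
    fix W W' assume "W \<in> Pow InfA" "W' \<in> Pow InfA" "chi (\<lambda>Z. Z \<in> W) = chi (\<lambda>Z. Z \<in> W')"
    then show "W = W'" using eqW[of W W'] by simp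
  qed
  have c1: "|Pow InfA| \<le>o |K|" unfolding K_def
    using card_of_ordLeq[of "Pow InfA" "(\<lambda>W. chi (\<lambda>Z. Z \<in> W)) ` Pow InfA"] inj by blast
  have c0: "|Pow (Pow A)| \<le>o |Pow InfA|" by (rule card_of_Pow_mono'[OF InfA_big])
  have Kinf: "infinite K"
  proof -
    have "infinite InfA" using card_of_ordLeq_infinite[OF InfA_big PowA_inf] .
    then have "infinite (Pow InfA)" by simp
    then show ?thesis using card_of_ordLeq_infinite[OF c1] by blast
  qed
  have "|K| \<le>o |B|"
  proof (rule Bg.weight_ge[OF Kinf _ _ Bs])
    show "K \<subseteq> HH" unfolding K_def HH_def Phi_def by blast
    fix \<xi> \<xi>' assume "\<xi> \<in> K" "\<xi>' \<in> K" and ag: "\<forall>x\<in>carrier GG. \<xi> x = \<xi>' x"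
    then obtain W W' where W: "W \<subseteq> InfA" "\<xi> = chi (\<lambda>Z. Z \<in> W)" "W' \<subseteq> InfA" "\<xi>' = chi (\<lambda>Z. Z \<in> W')"
      unfolding K_def by blast
    have "W = W'" by (rule eqW[OF W(1) W(3)]) (use ag W in simp)
    then show "\<xi> = \<xi>'" using W by simp
  qed
  then show ?thesis by (rule ordLeq_transitive[OF ordLeq_transitive[OF c0 c1]])
qed

lemma main:
  "\<exists>(G :: 'a set monoid) (T :: 'a set topology).
           topological_group G T \<and> comm_group G \<and> Hausdorff_space T \<and>
           precompact_group G T \<and>
           pseudochar_is T (card_of A) \<and>
           density_is T (card_of (Pow A)) \<and>
           ordIso2 (card_of (carrier G)) (card_of (Pow A)) \<and>
           weight_is T (card_of (Pow (Pow A)))"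
proof -
  interpret Bg: bgrp GG HH by (rule bgrp_GG)
  have tsp: "topspace (topH GG HH) = Pow A" by (simp add: topspace_topH)
  have sepS0: "\<forall>x\<in>carrier GG. \<forall>y\<in>carrier GG. (\<forall>\<xi>\<in>S0. \<xi> x = \<xi> y) \<longrightarrow> x = y"
  proof (intro ballI impI)
    fix x y assume x: "x \<in> carrier GG" and y: "y \<in> carrier GG" and ag: "\<forall>\<xi>\<in>S0. \<xi> x = \<xi> y"
    show "x = y"
    proof (rule ccontr)
      assume ne: "x \<noteq> y"
      have xA: "x \<in> Pow A" and yA: "y \<in> Pow A" using x y by simp_all
      have "\<exists>\<xi>\<in>S0. \<xi> x \<noteq> \<xi> y" by (rule S0_sep[OF xA yA ne])
      then obtain \<xi> where xi: "\<xi> \<in> S0" "\<xi> x \<noteq> \<xi> y" by (elim bexE)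
      have "\<xi> x = \<xi> y" using ag xi(1) by simp
      then show False using xi(2) by simp
    qed
  qed
  have tg: "topological_group GG (topH GG HH)" by (rule Bg.topgroup)
  have hs: "Hausdorff_space (topH GG HH)"
  proof (rule Bg.hausdorff)
    fix x y assume x: "x \<in> carrier GG" and y: "y \<in> carrier GG" and ne: "x \<noteq> y"
    have xA: "x \<in> Pow A" and yA: "y \<in> Pow A" using x y by simp_all
    have "\<exists>\<xi>\<in>S0. \<xi> x \<noteq> \<xi> y" by (rule S0_sep[OF xA yA ne])
    then obtain \<xi> where xi: "\<xi> \<in> S0" "\<xi> x \<noteq> \<xi> y" by (elim bexE)
    have "\<xi> \<in> HH" using xi(1) S0_HH by blast
    then show "\<exists>\<xi>\<in>HH. \<xi> x \<noteq> \<xi> y" using xi(2) by (intro bexI)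
  qed
  have pc: "precompact_group GG (topH GG HH)" by (rule Bg.precompact)
  have ps: "pseudochar_is (topH GG HH) |A|"
    unfolding pseudochar_is_def
  proof (intro conjI ballI allI impI)
    fix x assume "x \<in> topspace (topH GG HH)"
    then have x: "x \<in> carrier GG" using tsp by simp
    show "pseudochar_at_le (topH GG HH) x |A|"
      by (rule Bg.pseudo_le[OF S0_HH S0_ne sepS0 x S0_card])
  next
    fix r' :: "'a rel" assume r': "Card_order r' \<and> (\<forall>x\<in>topspace (topH GG HH). pseudochar_at_le (topH GG HH) x r')"
    have "\<one>\<^bsub>GG\<^esub> \<in> topspace (topH GG HH)" using tsp e_in[OF empty_M] by simp
    then have "pseudochar_at_le (topH GG HH) \<one>\<^bsub>GG\<^esub> r'" using r' by blast
    show "|A| \<le>o r'"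
    proof (rule Bg.pseudo_ge[OF inf])
      fix S assume "S \<subseteq> HH" "|S| <o |A|"
      then show "\<exists>x\<in>carrier GG. x \<noteq> \<one>\<^bsub>GG\<^esub> \<and> (\<forall>\<xi>\<in>S. \<xi> x = False)" by (rule ker)
    next
      show "pseudochar_at_le (topH GG HH) \<one>\<^bsub>GG\<^esub> r'" by fact
    qed
  qed
  have dens: "density_is (topH GG HH) |Pow A|"
    unfolding density_is_def
  proof (intro conjI allI impI)
    have "dense_in (topH GG HH) (Pow A)"
      unfolding dense_in_def using closure_of_topspace[of "topH GG HH"] tsp by simp
    moreover have "|Pow A| =o |Pow A|" by (rule card_of_refl)
    ultimately show "\<exists>D. dense_in (topH GG HH) D \<and> |D| =o |Pow A|" by blast
  next
    fix D assume "dense_in (topH GG HH) D"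
    then show "|Pow A| \<le>o |D|" by (rule density)
  qed
  have cd: "|carrier GG| =o |Pow A|" by (simp add: card_of_refl)
  have wt: "weight_is (topH GG HH) |Pow (Pow A)|"
    unfolding weight_is_def
  proof (intro conjI allI impI)
    define B0 where "B0 = {U. openin (topH GG HH) U}"
    have b: "base_of (topH GG HH) B0"
      unfolding base_of_def
    proof (intro conjI ballI allI impI)
      fix U assume "U \<in> B0" then show "openin (topH GG HH) U" by (simp add: B0_def)
    next
      fix U assume "openin (topH GG HH) U"
      then have "{U} \<subseteq> B0" "\<Union>{U} = U" by (simp_all add: B0_def)
      then show "\<exists>B'\<subseteq>B0. \<Union>B' = U" by blast
    qed
    have "B0 \<subseteq> Pow (Pow A)"
    proof
      fix U assume "U \<in> B0"
      then have "openin (topH GG HH) U" by (simp add: B0_def)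
      then have "U \<subseteq> topspace (topH GG HH)" by (rule openin_subset)
      then show "U \<in> Pow (Pow A)" using tsp by simp
    qed
    then have "|B0| \<le>o |Pow (Pow A)|" by (rule card_of_mono1)
    moreover have "|Pow (Pow A)| \<le>o |B0|" by (rule weight[OF b])
    ultimately have "|B0| =o |Pow (Pow A)|" by (simp add: ordIso_iff_ordLeq)
    then show "\<exists>B. base_of (topH GG HH) B \<and> |B| =o |Pow (Pow A)|" using b by blast
  next
    fix B assume "base_of (topH GG HH) B"
    then show "|Pow (Pow A)| \<le>o |B|" by (rule weight)
  qed
  show ?thesis
    by (intro exI[of _ GG] exI[of _ "topH GG HH"] conjI tg comm_GG hs pc ps dens cd wt)
qed

end

theorem mainTheorem13:
  fixes A :: "'a set"
  assumes "infinite A"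
  shows "\<exists>(G :: 'a set monoid) (T :: 'a set topology).
           topological_group G T \<and> comm_group G \<and> Hausdorff_space T \<and>
           precompact_group G T \<and>
           pseudochar_is T (card_of A) \<and>
           density_is T (card_of (Pow A)) \<and>
           ordIso2 (card_of (carrier G)) (card_of (Pow A)) \<and>
           weight_is T (card_of (Pow (Pow A)))"
proof -
  have PA: "infinite (Pow A)" using assms by simp
  have l1: "|Fpow (Pow A)| \<le>o |Pow A|" by (rule Fpow_card[OF PA])
  have "inj_on (\<lambda>Z. {Z}) (Pow A) \<and> (\<lambda>Z. {Z}) ` Pow A \<subseteq> Fpow (Pow A)"
    by (auto simp: Fpow_def)
  then have l2: "|Pow A| \<le>o |Fpow (Pow A)|" using card_of_ordLeq by blast
  have "|Fpow (Pow A)| =o |Pow A|" using l1 l2 by (simp add: ordIso_iff_ordLeq)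
  then obtain e where e: "bij_betw e (Fpow (Pow A)) (Pow A)" using card_of_ordIso by blast
  interpret model A e by (rule model.intro[OF assms e])
  show ?thesis by (rule main)
qed

end
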